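(* Let $n\ge3$, $m=n-1$, and consider $$(P):\ \sup\ x_{n-1}\ \text{ s.t. }\ x_1E_1+\sum_{i=2}^{n-1}x_i(E_i+E_{i-1,n})\preceq I_{n-1}\oplus 0_1,$$ with dual $(D)$. Then $\operatorname{val}(P)=0$ and $\operatorname{val}(D)=1$.
   Context: $E_{ij}\in\mathcal S^n$ is the symmetric matrix whose only nonzero entries are $1$ in positions $(i,j)$ and $(j,i)$; $E_i:=E_{ii}$. For $(P)$: $\sup\{c^Tx:\sum_ix_iA_i\preceq B\}$ the dual is $(D)$: $\inf\{B\bullet Y:A_i\bullet Y=c_i\ \forall i,\ Y\succeq0\}$, $S\bullet T=\operatorname{trace}(ST)$. *)

theory Defs
  imports Complex_Main "HOL-Library.Extended_Real"
begin

text \<open>Real n x n matrices are represented as functions nat => nat => real, of which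
only the entries with indices in {1..n} matter (1-based, as in the paper).\<close>

type_synonym rmat = "nat \<Rightarrow> nat \<Rightarrow> real"

definition Emat :: "nat \<Rightarrow> nat \<Rightarrow> rmat" where
  "Emat i j = (\<lambda>a b. if (a = i \<and> b = j) \<or> (a = j \<and> b = i) then 1 else 0)"

definition symm :: "nat \<Rightarrow> rmat \<Rightarrow> bool" where
  "symm n M \<longleftrightarrow> (\<forall>a\<in>{1..n}. \<forall>b\<in>{1..n}. M a b = M b a)"

definition psd :: "nat \<Rightarrow> rmat \<Rightarrow> bool" where
  "psd n M \<longleftrightarrow> symm n M \<and>
     (\<forall>v :: nat \<Rightarrow> real. (\<Sum>a\<in>{1..n}. \<Sum>b\<in>{1..n}. v a * M a b * v b) \<ge> 0)"

definition loewner_le :: "nat \<Rightarrow> rmat \<Rightarrow> rmat \<Rightarrow> bool" where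
  "loewner_le n X Y \<longleftrightarrow> psd n (\<lambda>a b. Y a b - X a b)"

definition frob :: "nat \<Rightarrow> rmat \<Rightarrow> rmat \<Rightarrow> real" where
  "frob n S T = (\<Sum>a\<in>{1..n}. \<Sum>b\<in>{1..n}. S a b * T b a)"

definition valP :: "nat \<Rightarrow> nat \<Rightarrow> (nat \<Rightarrow> rmat) \<Rightarrow> rmat \<Rightarrow> (nat \<Rightarrow> real) \<Rightarrow> ereal" where
  "valP n m A B c =
     (SUP x \<in> {x :: nat \<Rightarrow> real. loewner_le n (\<lambda>a b. \<Sum>i\<in>{1..m}. x i * A i a b) B}.
        ereal (\<Sum>i\<in>{1..m}. c i * x i))"

definition valD :: "nat \<Rightarrow> nat \<Rightarrow> (nat \<Rightarrow> rmat) \<Rightarrow> rmat \<Rightarrow> (nat \<Rightarrow> real) \<Rightarrow> ereal" where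
  "valD n m A B c =
     (INF Y \<in> {Y. psd n Y \<and> (\<forall>i\<in>{1..m}. frob n (A i) Y = c i)}. ereal (frob n B Y))"

definition exA :: "nat \<Rightarrow> nat \<Rightarrow> rmat" where
  "exA n i = (if i = 1 then Emat 1 1
              else (\<lambda>a b. Emat i i a b + Emat (i - 1) n a b))"

definition exB :: "nat \<Rightarrow> rmat" where
  "exB n = (\<lambda>a b. if a = b \<and> a \<le> n - 1 then 1 else 0)"

definition exc :: "nat \<Rightarrow> nat \<Rightarrow> real" where
  "exc n i = (if i = n - 1 then 1 else 0)"

end

theory Submission
  imports Defs
begin

lemma ifm1: "(if c then (1::real) else 0) * y = (if c then y else 0)" by simp
lemma ifm2: "y * (if c then (1::real) else 0) = (if c then y else 0)" by simp

lemma sum_if_conj: "finite S \<Longrightarrow> (\<Sum>b\<in>S. if P \<and> b = q then f b else 0) = (if P \<and> q \<in> S then f q else (0::real))"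
  by (cases P) (simp_all add: sum.delta')
lemma sum_if_conj2: "finite S \<Longrightarrow> (\<Sum>b\<in>S. if b = q \<and> P then f b else 0) = (if P \<and> q \<in> S then f q else (0::real))"
  by (cases P) (simp_all add: sum.delta')

lemma sum_two:
  fixes s t :: real
  assumes "a \<in> S" "b \<in> S" "a \<noteq> b" "finite S"
  shows "(\<Sum>k\<in>S. (if k = a then s else if k = b then t else 0) * g k) = s * g a + t * g b"
proof -
  have "(\<Sum>k\<in>S. (if k = a then s else if k = b then t else 0) * g k)
      = (\<Sum>k\<in>S. (if k = a then s * g a else 0) + (if k = b then t * g b else 0))"
    by (rule sum.cong) (use assms in auto)
  also have "\<dots> = s * g a + t * g b" using assms by (simp add: sum.distrib)
  finally show ?thesis .
qed

lemma psd_diag: assumes "psd n M" "a \<in> {1..n}" shows "M a a \<ge> 0"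
proof -
  define v where "v = (\<lambda>x. if x = a then 1 else (0::real))"
  have "0 \<le> (\<Sum>x\<in>{1..n}. \<Sum>b\<in>{1..n}. v x * M x b * v b)"
    using assms unfolding psd_def by blast
  also have "\<dots> = M a a" using assms(2) unfolding v_def by (simp add: ifm1 ifm2 sum_if_conj sum.delta')
  finally show ?thesis .
qed

lemma psd_zero: assumes "psd n M" "a \<in> {1..n}" "b \<in> {1..n}" "M a a = 0"
  shows "M a b = 0"
proof (cases "a = b")
  case True then show ?thesis using assms by simp
next
  case False
  have sym: "M b a = M a b" using assms unfolding psd_def symm_def by auto
  have q: "M b b + 2 * s * M a b \<ge> 0" for s
  proof -
    define v where "v = (\<lambda>k. if k = a then s else if k = b then 1 else (0::real))"
    have "0 \<le> (\<Sum>x\<in>{1..n}. \<Sum>y\<in>{1..n}. v x * M x y * v y)"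
      using assms unfolding psd_def by blast
    also have "\<dots> = (\<Sum>x\<in>{1..n}. v x * (\<Sum>y\<in>{1..n}. v y * (M x y)))"
      by (simp add: sum_distrib_left mult_ac)
    also have "\<dots> = (\<Sum>x\<in>{1..n}. v x * (s * M x a + 1 * M x b))"
      unfolding v_def using sum_two[of a "{1..n}" b s 1] assms False
      by simp
    also have "\<dots> = s * (s * M a a + 1 * M a b) + 1 * (s * M b a + 1 * M b b)"
      unfolding v_def by (rule sum_two) (use assms False in auto)
    finally show ?thesis using assms(4) sym by (simp add: algebra_simps)
  qed
  show ?thesis
  proof (rule ccontr)
    assume ne: "M a b \<noteq> 0"
    have "M b b + 2 * (- (M b b + 1) / (2 * M a b)) * M a b \<ge> 0" by (rule q)
    moreover have "2 * (- (M b b + 1) / (2 * M a b)) * M a b = - (M b b + 1)" using ne by simp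
    ultimately show False by simp
  qed
qed

lemma frob_add: "frob n (\<lambda>a b. S a b + T a b) Y = frob n S Y + frob n T Y"
  unfolding frob_def by (simp add: distrib_right sum.distrib)

lemma frob_Emat: assumes "p \<in> {1..n}" "q \<in> {1..n}"
  shows "frob n (Emat p q) Y = (if p = q then Y p p else Y q p + Y p q)"
proof (cases "p = q")
  case True
  then show ?thesis using assms unfolding frob_def Emat_def
    by (simp add: ifm1 sum_if_conj sum.delta')
next
  case False
  have "frob n (Emat p q) Y = (\<Sum>a\<in>{1..n}. (if a = p then Y q p else 0) + (if a = q then Y p q else 0))"
    unfolding frob_def Emat_def
  proof (rule sum.cong[OF refl])
    fix a assume "a \<in> {1..n}"
    have "(\<Sum>b\<in>{1..n}. (if a = p \<and> b = q \<or> a = q \<and> b = p then 1 else 0) * Y b a) =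
          (\<Sum>b\<in>{1..n}. (if a = p \<and> b = q then Y b a else 0) + (if a = q \<and> b = p then Y b a else 0))"
      by (rule sum.cong) (use False in auto)
    also have "\<dots> = (if a = p then Y q p else 0) + (if a = q then Y p q else 0)"
      using assms by (simp add: sum.distrib sum_if_conj)
    finally show "(\<Sum>b\<in>{1..n}. (if a = p \<and> b = q \<or> a = q \<and> b = p then 1 else 0) * Y b a) =
         (if a = p then Y q p else 0) + (if a = q then Y p q else 0)" .
  qed
  also have "\<dots> = Y q p + Y p q" using assms by (simp add: sum.distrib)
  finally show ?thesis using False by simp
qed

lemma frob_single: assumes "p \<in> {1..n}"
  shows "frob n S (\<lambda>a b. if a = p \<and> b = p then 1 else 0) = S p p"
  using assms unfolding frob_def by (simp add: ifm2 sum_if_conj sum_if_conj2 sum.delta')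


lemma e1: "n \<ge> 3 \<Longrightarrow> i \<in> {1..n-1} \<Longrightarrow> exA n i n n = 0"
  unfolding exA_def Emat_def by (simp split: if_split; arith)
lemma e2: assumes "n \<ge> 3" "i \<in> {1..n-1}" shows "exA n i n (n-2) = (if i = n-1 then 1 else 0)"
proof (cases "i = 1")
  case True then show ?thesis using assms unfolding exA_def Emat_def by simp
next
  case False
  have "(n = i - 1 \<and> n - 2 = n \<or> n = n \<and> n - 2 = i - 1) \<longleftrightarrow> i = n - 1" using assms False by auto
  moreover have "\<not> (n = i \<and> n - 2 = i)" using assms by auto
  ultimately show ?thesis using False unfolding exA_def Emat_def by simp
qed

lemma primal:
  fixes n :: nat assumes n3: "n \<ge> 3"
  shows "valP n (n - 1) (exA n) (exB n) (exc n) = 0"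
proof -
  define S where "S = {x :: nat \<Rightarrow> real. loewner_le n (\<lambda>a b. \<Sum>i\<in>{1..n-1}. x i * exA n i a b) (exB n)}"
  have obj: "(\<Sum>i\<in>{1..n-1}. exc n i * x i) = x (n-1)" for x
  proof -
    have "(\<Sum>i\<in>{1..n-1}. exc n i * x i) = (\<Sum>i\<in>{1..n-1}. if i = n-1 then x i else 0)"
      by (rule sum.cong) (auto simp: exc_def)
    also have "\<dots> = x (n-1)" using n3 by (simp add: sum.delta' Suc_le_eq)
    finally show ?thesis .
  qed
  have z: "(\<lambda>_. 0) \<in> S"
  proof -
    have "psd n (exB n)"
      unfolding psd_def
    proof
      show "symm n (exB n)" unfolding symm_def exB_def by auto
      show "\<forall>v. 0 \<le> (\<Sum>a\<in>{1..n}. \<Sum>b\<in>{1..n}. v a * exB n a b * v b)"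
      proof
        fix v :: "nat \<Rightarrow> real"
        have "(\<Sum>a\<in>{1..n}. \<Sum>b\<in>{1..n}. v a * exB n a b * v b) = (\<Sum>a\<in>{1..n}. if a \<le> n - 1 then v a * v a else 0)"
        proof (rule sum.cong[OF refl])
          fix a assume a: "a \<in> {1..n}"
          have "(\<Sum>b\<in>{1..n}. v a * exB n a b * v b) = (\<Sum>b\<in>{1..n}. if b = a then (if a \<le> n - 1 then v a * v a else 0) else 0)"
            by (rule sum.cong) (auto simp: exB_def)
          also have "\<dots> = (if a \<le> n - 1 then v a * v a else 0)" using a by (simp add: sum.delta')
          finally show "(\<Sum>b\<in>{1..n}. v a * exB n a b * v b) = (if a \<le> n - 1 then v a * v a else 0)" .
        qed
        also have "\<dots> \<ge> 0" by (rule sum_nonneg) auto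
        finally show "0 \<le> (\<Sum>a\<in>{1..n}. \<Sum>b\<in>{1..n}. v a * exB n a b * v b)" .
      qed
    qed
    then show ?thesis unfolding S_def loewner_le_def by simp
  qed
  have feas: "x (n-1) = 0" if "x \<in> S" for x
  proof -
    define M where "M = (\<lambda>a b. exB n a b - (\<Sum>i\<in>{1..n-1}. x i * exA n i a b))"
    have psdM: "psd n M" using that unfolding S_def loewner_le_def M_def by simp
    have e1: "exA n i n n = 0" if "i \<in> {1..n-1}" for i
      using that by (rule e1[OF n3])
    have e2: "exA n i n (n-2) = (if i = n-1 then 1 else 0)" if "i \<in> {1..n-1}" for i
      using that by (rule e2[OF n3])
    have "M n n = 0" unfolding M_def using e1 n3 by (simp add: exB_def)
    then have "M n (n-2) = 0" using psd_zero[OF psdM, of n "n-2"] n3 by auto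
    moreover have "(\<Sum>i\<in>{1..n-1}. x i * exA n i n (n-2)) = (\<Sum>i\<in>{1..n-1}. if i = n-1 then x i else 0)"
      by (rule sum.cong) (auto simp: e2)
    moreover have "(\<Sum>i\<in>{1..n-1}. if i = n-1 then x i else (0::real)) = x (n-1)" using n3 by (simp add: sum.delta' Suc_le_eq)
    moreover have "n \<noteq> n - 2" using n3 by arith
    ultimately show ?thesis unfolding M_def using n3 by (simp add: exB_def)
  qed
  have "valP n (n - 1) (exA n) (exB n) (exc n) = (SUP x\<in>S. ereal (x (n-1)))"
    unfolding valP_def S_def obj ..
  also have "\<dots> = 0"
    by (rule SUP_eq_const) (use z feas zero_ereal_def in auto)
  finally show ?thesis .
qed


lemma exA_frob:
  assumes n3: "n \<ge> 3" and i: "i \<in> {2..n-1}" and sym: "symm n Y"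
  shows "frob n (exA n i) Y = Y i i + 2 * Y (i-1) n"
proof -
  have "exA n i = (\<lambda>a b. Emat i i a b + Emat (i - 1) n a b)" using i unfolding exA_def by auto
  then have "frob n (exA n i) Y = frob n (Emat i i) Y + frob n (Emat (i-1) n) Y"
    by (simp add: frob_add)
  also have "\<dots> = Y i i + (Y n (i-1) + Y (i-1) n)"
  proof -
    have "i \<in> {1..n}" "i - 1 \<in> {1..n}" "n \<in> {1..n}" "i - 1 \<noteq> n" using i n3 by auto
    then show ?thesis by (simp add: frob_Emat)
  qed
  also have "Y n (i-1) = Y (i-1) n"
  proof -
    have "i - 1 \<in> {1..n}" "n \<in> {1..n}" using i n3 by auto
    then show ?thesis using sym unfolding symm_def by blast
  qed
  finally show ?thesis by simp
qed

lemma dual: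
  fixes n :: nat assumes n3: "n \<ge> 3"
  shows "valD n (n - 1) (exA n) (exB n) (exc n) = 1"
proof -
  define S where "S = {Y. psd n Y \<and> (\<forall>i\<in>{1..n-1}. frob n (exA n i) Y = exc n i)}"
  define Y0 where "Y0 = (\<lambda>a b. if a = n-1 \<and> b = n-1 then 1 else (0::real))"
  have p1: "n - 1 \<in> {1..n}" using n3 by simp
  have Y0S: "Y0 \<in> S"
  proof -
    have "psd n Y0" unfolding psd_def
    proof
      show "symm n Y0" unfolding symm_def Y0_def by auto
      show "\<forall>v. 0 \<le> (\<Sum>a\<in>{1..n}. \<Sum>b\<in>{1..n}. v a * Y0 a b * v b)"
      proof
        fix v :: "nat \<Rightarrow> real"
        have "(\<Sum>a\<in>{1..n}. \<Sum>b\<in>{1..n}. v a * Y0 a b * v b) = (\<Sum>a\<in>{1..n}. if a = n-1 then v a * v a else 0)"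
        proof (rule sum.cong[OF refl])
          fix a assume a: "a \<in> {1..n}"
          have "(\<Sum>b\<in>{1..n}. v a * Y0 a b * v b) = (\<Sum>b\<in>{1..n}. if b = n-1 then (if a = n-1 then v a * v a else 0) else 0)"
            by (rule sum.cong) (auto simp: Y0_def)
          also have "\<dots> = (if a = n-1 then v a * v a else 0)" using p1 by (simp add: sum.delta')
          finally show "(\<Sum>b\<in>{1..n}. v a * Y0 a b * v b) = (if a = n-1 then v a * v a else 0)" .
        qed
        also have "\<dots> \<ge> 0" by (rule sum_nonneg) auto
        finally show "0 \<le> (\<Sum>a\<in>{1..n}. \<Sum>b\<in>{1..n}. v a * Y0 a b * v b)" .
      qed
    qed
    moreover have "frob n (exA n i) Y0 = exc n i" if "i \<in> {1..n-1}" for i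
    proof -
      have "frob n (exA n i) Y0 = exA n i (n-1) (n-1)" unfolding Y0_def by (rule frob_single[OF p1])
      also have "\<dots> = exc n i"
      proof (cases "i = 1")
        case True
        moreover have "n - 1 \<noteq> 1" using n3 by arith
        ultimately show ?thesis unfolding exA_def Emat_def exc_def by simp
      next
        case False
        have "n - 1 \<noteq> n" using n3 by arith
        moreover have "(n - 1 = i) \<longleftrightarrow> (i = n - 1)" by auto
        ultimately show ?thesis using False unfolding exA_def Emat_def exc_def by simp
      qed
      finally show ?thesis .
    qed
    ultimately show ?thesis unfolding S_def by blast
  qed
  have "frob n (exB n) Y0 = exB n (n-1) (n-1)" unfolding Y0_def by (rule frob_single[OF p1])
  then have obj0: "frob n (exB n) Y0 = 1" by (simp add: exB_def)
  have lb: "frob n (exB n) Y \<ge> 1" if "Y \<in> S" for Y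
  proof -
    have psdY: "psd n Y" and con: "\<And>i. i \<in> {1..n-1} \<Longrightarrow> frob n (exA n i) Y = exc n i"
      using that unfolding S_def by auto
    have sym: "symm n Y" using psdY unfolding psd_def by auto
    have Y11: "Y 1 1 = 0"
    proof -
      have "frob n (exA n 1) Y = Y 1 1" unfolding exA_def using n3 by (simp add: frob_Emat)
      moreover have "exc n 1 = 0" using n3 unfolding exc_def by simp
      ultimately show ?thesis using con[of 1] n3 by simp
    qed
    have step: "\<forall>k. Suc k \<le> n - 2 \<longrightarrow> Y (Suc k) (Suc k) = 0"
    proof
      fix k show "Suc k \<le> n - 2 \<longrightarrow> Y (Suc k) (Suc k) = 0"
      proof (induction k)
        case 0 then show ?case using Y11 by simp
      next
        case (Suc k)
        show ?case
        proof
          assume k: "Suc (Suc k) \<le> n - 2"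
          then have "Y (Suc k) (Suc k) = 0" using Suc by simp
          then have z: "Y (Suc k) n = 0" using psd_zero[OF psdY, of "Suc k" n] k by simp
          have "frob n (exA n (Suc (Suc k))) Y = Y (Suc (Suc k)) (Suc (Suc k)) + 2 * Y (Suc k) n"
            using exA_frob[OF n3 _ sym, of "Suc (Suc k)"] k by simp
          moreover have "frob n (exA n (Suc (Suc k))) Y = 0"
            using con[of "Suc (Suc k)"] k unfolding exc_def by simp
          ultimately show "Y (Suc (Suc k)) (Suc (Suc k)) = 0" using z by simp
        qed
      qed
    qed
    have e: "Suc (n-3) = n - 2" using n3 by arith
    have "Y (Suc (n-3)) (Suc (n-3)) = 0" using step[rule_format, of "n-3"] e by simp
    then have "Y (n-2) (n-2) = 0" by (simp only: e)
    then have z: "Y (n-2) n = 0" using psd_zero[OF psdY, of "n-2" n] n3 by simp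
    have "frob n (exA n (n-1)) Y = Y (n-1) (n-1) + 2 * Y (n-1-1) n"
      using exA_frob[OF n3 _ sym, of "n-1"] n3 by simp
    moreover have "n - 1 - 1 = n - 2" by simp
    moreover have "frob n (exA n (n-1)) Y = 1" using con[of "n-1"] n3 unfolding exc_def by simp
    ultimately have Ynn: "Y (n-1) (n-1) = 1" using z by simp
    have "frob n (exB n) Y = (\<Sum>a\<in>{1..n}. if a \<le> n-1 then Y a a else 0)"
      unfolding frob_def
    proof (rule sum.cong[OF refl])
      fix a assume a: "a \<in> {1..n}"
      have "(\<Sum>b\<in>{1..n}. exB n a b * Y b a) = (\<Sum>b\<in>{1..n}. if b = a then (if a \<le> n-1 then Y a a else 0) else 0)"
        by (rule sum.cong) (auto simp: exB_def)
      also have "\<dots> = (if a \<le> n-1 then Y a a else 0)" using a by (simp add: sum.delta')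
      finally show "(\<Sum>b\<in>{1..n}. exB n a b * Y b a) = (if a \<le> n-1 then Y a a else 0)" .
    qed
    also have "\<dots> \<ge> (if n - 1 \<le> n-1 then Y (n-1) (n-1) else 0)"
      by (rule member_le_sum) (use p1 psd_diag[OF psdY] in auto)
    finally show ?thesis using Ynn by simp
  qed
  have "valD n (n - 1) (exA n) (exB n) (exc n) = (INF Y\<in>S. ereal (frob n (exB n) Y))"
    unfolding valD_def S_def ..
  also have "\<dots> = 1"
  proof (rule antisym)
    show "(INF Y\<in>S. ereal (frob n (exB n) Y)) \<le> 1"
      using INF_lower[OF Y0S, of "\<lambda>Y. ereal (frob n (exB n) Y)"] obj0 by (simp add: one_ereal_def)
    show "1 \<le> (INF Y\<in>S. ereal (frob n (exB n) Y))"
      by (rule INF_greatest) (use lb in \<open>auto simp: one_ereal_def\<close>)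
  qed
  finally show ?thesis .
qed

theorem mainTheorem6:
  fixes n :: nat
  assumes "n \<ge> 3"
  shows "valP n (n - 1) (exA n) (exB n) (exc n) = 0
       \<and> valD n (n - 1) (exA n) (exB n) (exc n) = 1"
  using primal[OF assms] dual[OF assms] by simp

end
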